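(* Let $D$ be a dataset, $\Omega=\{\omega_1,\dots,\omega_k\}$ a finite set of outcomes, $q$ a real-valued quality function with sensitivity $\Delta>0$, and $\varepsilon>0$; let $q_*=\max_i q(D,\omega_i)$. Then the output distributions of the Permute-and-Flip mechanism and of Intermediate Algorithm A (both defined below) on these inputs are the same.
   Context: $\mathrm{Expo}(\lambda)$ denotes the exponential distribution with rate $\lambda$, density $\lambda e^{-\lambda x}\mathbf{1}[x\ge0]$. $\mathrm{Bernoulli}(p)$ equals $1$ with probability $p$. Permute-and-Flip: compute $q_*$; draw a uniformly random permutation $\pi$ of $\{1,\dots,k\}$; for $j=1,\dots,k$ in order, let $r=\pi(j)$, $p=\exp\left(\frac{\varepsilon}{2\Delta}(q(D,\omega_r)-q_* )\right)$, and flip an independent $\mathrm{Bernoulli}(p)$ coin; if it equals $1$, return $r$ and stop. Intermediate Algorithm A: compute $q_*$; for each $i=1,\dots,k$ independently set $v_i=q(D,\omega_i)+X_i$ with $X_i\sim\mathrm{Expo}(\varepsilon/(2\Delta))$; let $S=\{i: v_i\ge q_*\}$ (nonempty, since it contains any index attaining $q_*$); return an element of $S$ chosen uniformly at random. *)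

theory Defs
  imports "HOL-Probability.Probability"
begin

definition q_star :: "('d \<Rightarrow> 'o \<Rightarrow> real) \<Rightarrow> 'd \<Rightarrow> (nat \<Rightarrow> 'o) \<Rightarrow> nat \<Rightarrow> real" where
  "q_star q D omega k = Max ((\<lambda>i. q D (omega i)) ` {1..k})"

text \<open>The empty-list case is never reached
  (an index attaining q_star has p = 1); it returns 0 by convention.\<close>
fun pf_scan :: "(nat \<Rightarrow> real) \<Rightarrow> nat list \<Rightarrow> nat pmf" where
  "pf_scan p [] = return_pmf 0"
| "pf_scan p (r # rs) =
     bernoulli_pmf (p r) \<bind> (\<lambda>b. if b then return_pmf r else pf_scan p rs)"

definition permute_and_flip ::
  "('d \<Rightarrow> 'o \<Rightarrow> real) \<Rightarrow> 'd \<Rightarrow> (nat \<Rightarrow> 'o) \<Rightarrow> nat \<Rightarrow> real \<Rightarrow> real \<Rightarrow> nat pmf" where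
  "permute_and_flip q D omega k \<epsilon> \<Delta> =
     pmf_of_set (permutations_of_set {1..k}) \<bind>
       pf_scan (\<lambda>r. exp (\<epsilon> / (2 * \<Delta>) * (q D (omega r) - q_star q D omega k)))"

definition expo_noise :: "real \<Rightarrow> nat \<Rightarrow> (nat \<Rightarrow> real) measure" where
  "expo_noise rate k = PiM {1..k} (\<lambda>i. density lborel (exponential_density rate))"

definition algorithm_A ::
  "('d \<Rightarrow> 'o \<Rightarrow> real) \<Rightarrow> 'd \<Rightarrow> (nat \<Rightarrow> 'o) \<Rightarrow> nat \<Rightarrow> real \<Rightarrow> real \<Rightarrow> nat measure" where
  "algorithm_A q D omega k \<epsilon> \<Delta> =
     expo_noise (\<epsilon> / (2 * \<Delta>)) k \<bind>
       (\<lambda>X. measure_pmf (pmf_of_set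
              {i \<in> {1..k}. q D (omega i) + X i \<ge> q_star q D omega k}))"

end

theory Submission imports Defs begin

fun first :: "(nat \<Rightarrow> bool) \<Rightarrow> nat list \<Rightarrow> nat" where
  "first b [] = 0"
| "first b (x # xs) = (if b x then x else first b xs)"

lemma pf_scan_Pi:
  "distinct xs \<Longrightarrow> pf_scan p xs = map_pmf (\<lambda>b. first b xs) (Pi_pmf (set xs) False (\<lambda>i. bernoulli_pmf (p i)))"
proof (induction xs)
  case Nil
  then show ?case by simp
next
  case (Cons x xs)
  have "map_pmf (\<lambda>b. first b (x # xs)) (Pi_pmf (set (x#xs)) False (\<lambda>i. bernoulli_pmf (p i)))
    = bernoulli_pmf (p x) \<bind> (\<lambda>y. map_pmf (\<lambda>f. first (f(x:=y)) (x#xs)) (Pi_pmf (set xs) False (\<lambda>i. bernoulli_pmf (p i))))"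
    using Cons.prems by (simp add: Pi_pmf_insert' map_bind_pmf map_pmf_def[symmetric] map_pmf_comp)
  also have "\<dots> = bernoulli_pmf (p x) \<bind> (\<lambda>y. if y then return_pmf x else pf_scan p xs)"
  proof (intro bind_pmf_cong refl)
    fix y assume "y \<in> set_pmf (bernoulli_pmf (p x))"
    have e: "\<And>f z. first (f(x:=z)) xs = first f xs" using Cons.prems
      by (induction xs) auto
    show "map_pmf (\<lambda>f. first (f(x:=y)) (x#xs)) (Pi_pmf (set xs) False (\<lambda>i. bernoulli_pmf (p i))) = (if y then return_pmf x else pf_scan p xs)"
      using Cons by (simp add: e)
  qed
  finally show ?case by simp
qed

lemma first_uniform:
  assumes "finite A" "{i\<in>A. b i} \<noteq> {}"
  shows "map_pmf (\<lambda>xs. first b xs) (pmf_of_set (permutations_of_set A)) = pmf_of_set {i\<in>A. b i}"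
  using assms
proof (induction "card A" arbitrary: A)
  case 0
  then show ?case by simp
next
  case (Suc n)
  define B where "B = {i\<in>A. b i}"
  have fA: "finite A" and ne: "A \<noteq> {}" and fB: "finite B" and neB: "B \<noteq> {}" and BA: "B \<subseteq> A"
    using Suc by (auto simp: B_def)
  have "map_pmf (\<lambda>xs. first b xs) (pmf_of_set (permutations_of_set A))
     = pmf_of_set A \<bind> (\<lambda>x. map_pmf (\<lambda>xs. first b (x#xs)) (pmf_of_set (permutations_of_set (A - {x}))))"
    by (simp add: random_permutation_of_set[OF fA ne] map_bind_pmf map_pmf_def[symmetric] map_pmf_comp)
  also have "\<dots> = pmf_of_set A \<bind> (\<lambda>x. if b x then return_pmf x else pmf_of_set B)"
  proof (intro bind_pmf_cong refl)
    fix x assume "x \<in> set_pmf (pmf_of_set A)"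
    then have xA: "x \<in> A" using fA ne by simp
    show "map_pmf (\<lambda>xs. first b (x#xs)) (pmf_of_set (permutations_of_set (A - {x}))) = (if b x then return_pmf x else pmf_of_set B)"
    proof (cases "b x")
      case True then show ?thesis by simp
    next
      case False
      have eq: "{i\<in>A-{x}. b i} = B" using False by (auto simp: B_def)
      have n: "n = card (A-{x})" using Suc.hyps(2) xA fA by simp
      have ne2: "{i\<in>A-{x}. b i} \<noteq> {}" using eq neB by simp
      have "map_pmf (\<lambda>xs. first b xs) (pmf_of_set (permutations_of_set (A - {x}))) = pmf_of_set {i\<in>A-{x}. b i}"
        using Suc.hyps(1)[OF n _ ne2] fA by simp
      then show ?thesis using False eq by simp
    qed
  qed
  also have "\<dots> = pmf_of_set B"
  proof (rule pmf_eqI)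
    fix r
    have "pmf (pmf_of_set A \<bind> (\<lambda>x. if b x then return_pmf x else pmf_of_set B)) r
       = (\<Sum>x\<in>A. pmf (if b x then return_pmf x else pmf_of_set B) r) / real (card A)"
      by (rule pmf_bind_pmf_of_set[OF ne fA])
    also have "(\<Sum>x\<in>A. pmf (if b x then return_pmf x else pmf_of_set B) r)
       = (\<Sum>x\<in>B. indicator {x} r) + (\<Sum>x\<in>A-B. indicator B r / real (card B))"
    proof -
      have f: "(\<lambda>x. pmf (if b x then return_pmf x else pmf_of_set B) r) = (\<lambda>x. if b x then indicator {x} r else indicator B r / real (card B))"
        using neB fB by (intro ext) (auto simp: pmf_return indicator_def)
      have i1: "A \<inter> {x. b x} = B" "A \<inter> - {x. b x} = A - B" by (auto simp: B_def)
      show ?thesis unfolding f using fA by (simp only: sum.If_cases i1)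
    qed
    finally show "pmf (pmf_of_set A \<bind> (\<lambda>x. if b x then return_pmf x else pmf_of_set B)) r = pmf (pmf_of_set B) r"
    proof -
      assume h: "pmf (pmf_of_set A \<bind> (\<lambda>x. if b x then return_pmf x else pmf_of_set B)) r =
        ((\<Sum>x\<in>B. indicator {x} r) + (\<Sum>x\<in>A-B. indicator B r / real (card B))) / real (card A)"
      have cB: "card B > 0" using fB neB by (simp add: card_gt_0_iff)
      have cA: "card (A - B) = card A - card B" "card B \<le> card A" using BA fA by (auto simp: card_Diff_subset card_mono finite_subset)
      show ?thesis
      proof (cases "r \<in> B")
        case True
        have s: "(\<Sum>x\<in>B. indicator {x} r :: real) = 1" using True fB
          by (simp add: indicator_def sum.delta' )
        have "real (card B) * pmf (pmf_of_set A \<bind> (\<lambda>x. if b x then return_pmf x else pmf_of_set B)) r = real (card B) * pmf (pmf_of_set B) r"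
          using True cB cA h s pmf_of_set[OF neB fB, of r]
          by (simp add: of_nat_diff field_simps)
        then show ?thesis using cB by simp
      next
        case False
        have s: "(\<Sum>x\<in>B. indicator {x} r :: real) = 0" using False
          by (intro sum.neutral) (auto simp: indicator_def)
        show ?thesis using False h s pmf_of_set[OF neB fB, of r] by simp
      qed
    qed
  qed
  finally show ?case by (simp add: B_def)
qed

lemma exp_tail:
  fixes l c :: real assumes l: "l > 0" and c: "c \<ge> 0"
  shows "emeasure (density lborel (exponential_density l)) {c..} = ennreal (exp (- c * l))"
    and "emeasure (density lborel (exponential_density l)) {..<c} = ennreal (1 - exp (- c * l))"
proof -
  let ?D = "density lborel (exponential_density l)"
  interpret prob_space ?D by (rule prob_space_exponential_density[OF l])
  have "emeasure ?D {..<c} = emeasure ?D {..c}"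
    apply (subst emeasure_density, simp, simp)+
    by (intro nn_integral_cong_AE) (auto simp: indicator_def intro!: eventually_mono[OF AE_lborel_singleton[of c]])
  also have "\<dots> = ennreal (1 - exp (- c * l))"
    using emeasure_erlang_density[OF l, of 0 c] c by (simp add: erlang_CDF_0 mult.commute)
  finally show lt: "emeasure ?D {..<c} = ennreal (1 - exp (- c * l))" .
  have "measure ?D {c..} = measure ?D (space ?D - {..<c})"
    by (intro arg_cong[where f="measure ?D"]) auto
  also have "\<dots> = 1 - measure ?D {..<c}" by (rule prob_compl) simp
  also have "measure ?D {..<c} = 1 - exp (- c * l)" using lt unfolding emeasure_eq_measure
    using l c by (subst (asm) ennreal_inj) auto
  finally show "emeasure ?D {c..} = ennreal (exp (- c * l))" by (simp add: emeasure_eq_measure)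
qed

theorem lemma1:
  fixes q :: "'d \<Rightarrow> 'o \<Rightarrow> real" and D :: 'd and omega :: "nat \<Rightarrow> 'o"
    and neighbor :: "'d \<Rightarrow> 'd \<Rightarrow> bool" and k :: nat and \<epsilon> \<Delta> :: real
  assumes "k \<ge> 1"
    and "inj_on omega {1..k}"
    and "\<Delta> > 0"
    and "\<forall>D1 D2 w. neighbor D1 D2 \<longrightarrow> \<bar>q D1 w - q D2 w\<bar> \<le> \<Delta>"
    and "\<epsilon> > 0"
  shows "measure_pmf (permute_and_flip q D omega k \<epsilon> \<Delta>) = algorithm_A q D omega k \<epsilon> \<Delta>"
proof -
  define A where "A = {1..k}"
  define l where "l = \<epsilon> / (2 * \<Delta>)"
  define a where "a i = q D (omega i)" for i
  define qs where "qs = q_star q D omega k"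
  define p where "p i = exp (l * (a i - qs))" for i
  define c where "c i = qs - a i" for i
  define PI where "PI = Pi_pmf A False (\<lambda>i. bernoulli_pmf (p i))"
  define Q where "Q = map_pmf (\<lambda>b. {i. b i}) PI"
  define DD where "DD = density lborel (exponential_density l)"
  define M where "M = expo_noise l k"
  define S where "S X = {i\<in>A. qs \<le> a i + X i}" for X :: "nat \<Rightarrow> real"
  have l: "l > 0" using assms by (simp add: l_def)
  have fA: "finite A" and neA: "A \<noteq> {}" using assms by (auto simp: A_def)
  have qs_ge: "a i \<le> qs" if "i \<in> A" for i
    using that fA by (auto simp: qs_def q_star_def a_def A_def intro!: Max_ge)
  have "qs \<in> a ` A"
    using Max_in[of "(\<lambda>i. q D (omega i)) ` A"] fA neA unfolding qs_def q_star_def a_def A_def by blast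
  then obtain i0 where i0: "i0 \<in> A" "a i0 = qs" by auto
  have c0: "c i \<ge> 0" if "i \<in> A" for i using qs_ge[OF that] by (simp add: c_def)
  have pc: "p i = exp (- c i * l)" for i by (simp add: p_def c_def algebra_simps)
  have p01: "0 \<le> p i" "p i \<le> 1" if "i \<in> A" for i
    using c0[OF that] l by (auto simp: pc)
  have p1: "p i0 = 1" using i0 by (simp add: p_def)

  have PF: "permute_and_flip q D omega k \<epsilon> \<Delta> = Q \<bind> pmf_of_set"
  proof -
    let ?P = "pmf_of_set (permutations_of_set A)"
    have neP: "permutations_of_set A \<noteq> {}" using fA by simp
    have "permute_and_flip q D omega k \<epsilon> \<Delta> = ?P \<bind> pf_scan p"
    proof -
      have "(\<lambda>r. exp (\<epsilon> / (2 * \<Delta>) * (q D (omega r) - q_star q D omega k))) = p"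
        by (simp add: fun_eq_iff p_def l_def a_def qs_def)
      then show ?thesis by (simp add: permute_and_flip_def A_def)
    qed
    also have "\<dots> = ?P \<bind> (\<lambda>xs. map_pmf (\<lambda>b. first b xs) PI)"
    proof (intro bind_pmf_cong refl)
      fix xs assume "xs \<in> set_pmf ?P"
      then have "xs \<in> permutations_of_set A" using neP by simp
      then have "distinct xs" "set xs = A" by (auto simp: permutations_of_set_def)
      then show "pf_scan p xs = map_pmf (\<lambda>b. first b xs) PI"
        by (simp add: pf_scan_Pi PI_def)
    qed
    also have "\<dots> = PI \<bind> (\<lambda>b. map_pmf (\<lambda>xs. first b xs) ?P)"
      unfolding map_pmf_def by (rule bind_commute_pmf)
    also have "\<dots> = PI \<bind> (\<lambda>b. pmf_of_set {i. b i})"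
    proof (intro bind_pmf_cong refl)
      fix b assume "b \<in> set_pmf PI"
      then have b: "b \<in> PiE_dflt A False (set_pmf \<circ> (\<lambda>i. bernoulli_pmf (p i)))"
        unfolding PI_def by (rule subsetD[OF set_Pi_pmf_subset'[OF fA, of False "\<lambda>i. bernoulli_pmf (p i)"]])
      then have "b i0 \<in> set_pmf (bernoulli_pmf (p i0))" using i0 by (auto simp: PiE_dflt_def)
      then have bi0: "b i0" using p1 by (cases "b i0") (auto simp: set_pmf_iff)
      have eq: "{i. b i} = {i\<in>A. b i}" using b by (auto simp: PiE_dflt_def)
      show "map_pmf (\<lambda>xs. first b xs) ?P = pmf_of_set {i. b i}"
        unfolding eq using bi0 i0 by (intro first_uniform fA) auto
    qed
    also have "\<dots> = Q \<bind> pmf_of_set" by (simp add: Q_def bind_map_pmf)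
    finally show ?thesis .
  qed
  have AA: "algorithm_A q D omega k \<epsilon> \<Delta> = measure_pmf Q \<bind> (\<lambda>T. measure_pmf (pmf_of_set T))"
  proof -
    define Box where "Box T = PiE A (\<lambda>i. if i \<in> T then {c i..} else {..<c i})" for T
    interpret DDp: prob_space DD unfolding DD_def by (rule prob_space_exponential_density[OF l])
    interpret product_sigma_finite "\<lambda>i::nat. DD"
      by (simp add: product_sigma_finite_def DDp.sigma_finite_measure_axioms)
    have Meq: "M = PiM A (\<lambda>i. DD)" by (simp add: M_def expo_noise_def A_def DD_def)
    have spM: "space M = PiE A (\<lambda>i. UNIV)" by (simp add: Meq space_PiM DD_def)
    have Box_eq: "S -` {T} \<inter> space M = Box T" if "T \<subseteq> A" for T
    proof -
      have "X \<in> S -` {T} \<longleftrightarrow> (\<forall>i\<in>A. c i \<le> X i \<longleftrightarrow> i \<in> T)" for X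
      proof -
        have "X \<in> S -` {T} \<longleftrightarrow> {i\<in>A. c i \<le> X i} = T" by (simp add: S_def c_def algebra_simps)
        also have "\<dots> \<longleftrightarrow> (\<forall>i\<in>A. c i \<le> X i \<longleftrightarrow> i \<in> T)" using that by blast
        finally show ?thesis .
      qed
      note pre = this
      have mem: "(X i \<in> (if i \<in> T then {c i..} else {..<c i})) \<longleftrightarrow> (c i \<le> X i \<longleftrightarrow> i \<in> T)" for X i
        by auto
      show ?thesis
      proof (rule set_eqI)
        fix X
        show "X \<in> S -` {T} \<inter> space M \<longleftrightarrow> X \<in> Box T"
          unfolding spM Box_def PiE_iff Int_iff pre mem by simp
      qed
    qed
    have Box_sets: "Box T \<in> sets M" for T
      unfolding Box_def Meq using fA by (intro sets_PiM_I_finite) (auto simp: DD_def)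
    have Sg: "S \<in> M \<rightarrow>\<^sub>M count_space (Pow A)"
      using fA by (subst measurable_count_space_eq2) (auto simp: Box_eq Box_sets S_def)
    have Smeas: "S \<in> M \<rightarrow>\<^sub>M count_space UNIV"
      using measurable_compose_countable'[of "Pow A" "\<lambda>T x. T" M "count_space UNIV" S] Sg fA
      by (simp add: countable_finite)
    have G: "(\<lambda>T. measure_pmf (pmf_of_set T)) \<in> count_space UNIV \<rightarrow>\<^sub>M subprob_algebra (count_space UNIV)"
      by (auto simp: measurable_count_space_eq1 measure_pmf_in_subprob_algebra)
    have neM: "space M \<noteq> {}" by (simp add: spM PiE_eq_empty_iff)
    have wM: "emeasure M (Box T) = ennreal (\<Prod>i\<in>A. if i \<in> T then p i else 1 - p i)" for T
    proof -
      have "emeasure M (Box T) = (\<Prod>i\<in>A. emeasure DD (if i \<in> T then {c i..} else {..<c i}))"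
        unfolding Meq Box_def using fA by (intro emeasure_PiM) (auto simp: DD_def)
      also have "\<dots> = (\<Prod>i\<in>A. ennreal (if i \<in> T then p i else 1 - p i))"
        by (intro prod.cong refl) (auto simp: DD_def exp_tail[OF l c0] pc)
      also have "\<dots> = ennreal (\<Prod>i\<in>A. if i \<in> T then p i else 1 - p i)"
        using p01 by (intro prod_ennreal) auto
      finally show ?thesis .
    qed
    have wQ: "emeasure Q {T} = ennreal (\<Prod>i\<in>A. if i \<in> T then p i else 1 - p i)" if "T \<subseteq> A" for T
    proof -
      have pre: "(\<lambda>b. {i. b i}) -` {T} = PiE_dflt A False (\<lambda>i. {(i \<in> T)})"
        using that by (auto simp: PiE_dflt_def)
      have "measure Q {T} = (\<Prod>i\<in>A. measure_pmf.prob (bernoulli_pmf (p i)) {(i \<in> T)})"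
        unfolding Q_def measure_map_pmf pre PI_def by (rule measure_Pi_pmf_PiE_dflt[OF fA])
      also have "\<dots> = (\<Prod>i\<in>A. if i \<in> T then p i else 1 - p i)"
        using p01 by (intro prod.cong refl) (auto simp: measure_pmf_single)
      finally show ?thesis by (simp add: measure_pmf.emeasure_eq_measure)
    qed
    have dist: "distr M (count_space UNIV) S = measure_pmf Q"
    proof (rule measure_eqI_countable_AE[where \<Omega>="Pow A"])
      show "AE x in distr M (count_space UNIV) S. x \<in> Pow A"
        using Smeas by (subst AE_distr_iff) (auto simp: S_def)
      show "AE x in measure_pmf Q. x \<in> Pow A"
        unfolding AE_measure_pmf_iff Q_def set_map_pmf PI_def
        using set_Pi_pmf_subset[OF fA, of False "\<lambda>i. bernoulli_pmf (p i)"] by auto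
      show "countable (Pow A)" using fA by (simp add: countable_finite)
      fix T assume "T \<in> Pow A"
      then show "emeasure (distr M (count_space UNIV) S) {T} = emeasure (measure_pmf Q) {T}"
        using Smeas by (simp add: emeasure_distr Box_eq wM wQ)
    qed simp_all
    have "algorithm_A q D omega k \<epsilon> \<Delta> = M \<bind> (\<lambda>X. measure_pmf (pmf_of_set (S X)))"
      by (simp add: algorithm_A_def M_def l_def S_def A_def a_def qs_def)
    also have "\<dots> = distr M (count_space UNIV) S \<bind> (\<lambda>T. measure_pmf (pmf_of_set T))"
      by (rule bind_distr[OF Smeas G neM, symmetric])
    finally show ?thesis unfolding dist .
  qed
  show ?thesis unfolding PF AA measure_pmf_bind ..
qed

end
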